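(* Let $f:\mathbb{R}^d\to\mathbb{R}$ be $\mu$-strongly convex, $L$-smooth (i.e. $\mu I\preceq\nabla^2 f(x)\preceq LI$ for all $x$) and $M$-strongly self-concordant. Let $1\le k<d$, let $x,x_+\in\mathbb{R}^d$, and let $B$ be a symmetric matrix with $B\succeq\nabla^2 f(x)$. Let $r:=\|x_+-x\|_{\nabla^2 f(x)}$, $P:=\big(1+\frac{Mr}{2}\big)^2B$ and $$B_+:=\mathrm{SR}\text{-}k\big(P,\nabla^2 f(x_+),E_k(P-\nabla^2 f(x_+))\big).$$ Then $B_+\succeq\nabla^2 f(x_+)$ and $$\frac{\mathrm{tr}(B_+-\nabla^2 f(x_+))}{\mathrm{tr}(\nabla^2 f(x_+))}\le\Big(1-\frac kd\Big)\Big(1+\frac{Mr}{2}\Big)^4\Big(\frac{\mathrm{tr}(B-\nabla^2 f(x))}{\mathrm{tr}(\nabla^2 f(x))}+2Mr\Big).$$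
   Context: $f$ is $M$-strongly self-concordant if $\nabla^2 f(y)-\nabla^2 f(x)\preceq M\|y-x\|_{\nabla^2 f(z)}\nabla^2 f(w)$ for all $x,y,z,w\in\mathbb{R}^d$, where $\|u\|_A=\sqrt{u^\top A u}$. For a symmetric matrix $C\in\mathbb{R}^{d\times d}$ and $1\le k<d$, $E_k(C)=[e_{i_1},\dots,e_{i_k}]\in\mathbb{R}^{d\times k}$, where $e_j$ is the $j$-th standard basis vector and $i_1,\dots,i_k$ are the indices of the $k$ largest diagonal entries of $C$. For symmetric positive definite $G\succeq A$ and full-rank $U\in\mathbb{R}^{d\times k}$: $\mathrm{SR}\text{-}k(G,A,U)=G$ if $GU=AU$, and otherwise $\mathrm{SR}\text{-}k(G,A,U)=G-(G-A)U\big(U^\top(G-A)U\big)^{\dagger}U^\top(G-A)$, where $\dagger$ is the Moore–Penrose pseudoinverse. *)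

theory Defs
  imports "HOL-Analysis.Analysis"
begin

definition loewner_le :: "real^'n^'n \<Rightarrow> real^'n^'n \<Rightarrow> bool" where
  "loewner_le A B \<longleftrightarrow> (\<forall>v::real^'n. 0 \<le> v \<bullet> ((B - A) *v v))"

definition symmetric_mat :: "real^'n^'n \<Rightarrow> bool" where
  "symmetric_mat A \<longleftrightarrow> transpose A = A"

definition mnorm :: "real^'n \<Rightarrow> real^'n^'n \<Rightarrow> real" where
  "mnorm u A = sqrt (u \<bullet> (A *v u))"

definition pinv :: "real^'m^'n \<Rightarrow> real^'n^'m" where
  "pinv A = (THE X. A ** X ** A = A \<and> X ** A ** X = X \<and>
       transpose (A ** X) = A ** X \<and> transpose (X ** A) = X ** A)"

definition sr_k :: "real^'n^'n \<Rightarrow> real^'n^'n \<Rightarrow> real^'k^'n \<Rightarrow> real^'n^'n" where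
  "sr_k G A U = (if G ** U = A ** U then G
     else G - (G - A) ** U ** pinv (transpose U ** (G - A) ** U) ** transpose U ** (G - A))"

text \<open>U is a valid E_k(C): U = [e_{i_1},...,e_{i_k}] where i_1..i_k (distinct) are indices of the
  k = CARD('k) largest diagonal entries of C (any tie-breaking, any column order).\<close>
definition is_Ek :: "real^'n^'n \<Rightarrow> real^'k^'n \<Rightarrow> bool" where
  "is_Ek C U \<longleftrightarrow> (\<exists>idx :: 'k \<Rightarrow> 'n. inj idx \<and>
      (\<forall>i\<in>range idx. \<forall>j. j \<notin> range idx \<longrightarrow> C$j$j \<le> C$i$i) \<and>
      U = (\<chi> j l. if j = idx l then 1 else 0))"

definition strongly_self_concordant :: "real \<Rightarrow> (real^'n \<Rightarrow> real^'n^'n) \<Rightarrow> bool" where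
  "strongly_self_concordant M H \<longleftrightarrow> (\<forall>x y z w.
      loewner_le (H y - H x) ((M * mnorm (y - x) (H z)) *\<^sub>R H w))"

end

theory Submission
  imports Defs
begin


lemma mm_sub_l: "(A::real^'n^'m) ** (B - C) = A ** B - A ** C"
  by (simp add: matrix_matrix_mult_def vec_eq_iff sum_subtractf algebra_simps)
lemma mm_sub_r: "((A::real^'n^'m) - B) ** C = A ** C - B ** C"
  by (simp add: matrix_matrix_mult_def vec_eq_iff sum_subtractf algebra_simps)
lemma mm_add_r: "((A::real^'n^'m) + B) ** C = A ** C + B ** C"
  by (simp add: matrix_matrix_mult_def vec_eq_iff sum.distrib algebra_simps)
lemma transpose_sub: "transpose ((A::real^'n^'m) - B) = transpose A - transpose B"
  by (simp add: transpose_def vec_eq_iff)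
lemma transpose_add: "transpose ((A::real^'n^'m) + B) = transpose A + transpose B"
  by (simp add: transpose_def vec_eq_iff)

lemma inner_mv_transpose: "(u::real^'n) \<bullet> (A *v v) = (transpose A *v u) \<bullet> v"
  by (metis dot_lmul_matrix transpose_matrix_vector transpose_transpose)

lemma inner_mv_sym: "transpose A = A \<Longrightarrow> (u::real^'n) \<bullet> (A *v v) = (A *v u) \<bullet> v"
  by (metis inner_mv_transpose)

lemma pinv_unique:
  fixes K :: "real^'m^'n"
  assumes "K ** X ** K = K" "X ** K ** X = X" "transpose (K ** X) = K ** X" "transpose (X ** K) = X ** K"
      and "K ** Y ** K = K" "Y ** K ** Y = Y" "transpose (K ** Y) = K ** Y" "transpose (Y ** K) = Y ** K"
  shows "X = Y"
proof -
  have "X = X ** (K ** X)" using assms(2) by (simp add: matrix_mul_assoc)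
  also have "\<dots> = X ** transpose (K ** X)" using assms(3) by simp
  also have "\<dots> = X ** transpose X ** transpose (K ** Y ** K)" using assms(5)
    by (simp add: matrix_transpose_mul matrix_mul_assoc)
  also have "\<dots> = X ** (transpose (K ** X) ** transpose (K ** Y))"
    by (simp add: matrix_transpose_mul matrix_mul_assoc)
  also have "\<dots> = X ** (K ** X ** (K ** Y))" using assms(3,7) by simp
  also have "\<dots> = X ** K ** Y" using assms(1) by (simp add: matrix_mul_assoc)
  finally have 1: "X = X ** K ** Y" .
  have "Y = (Y ** K) ** Y" using assms(6) by (simp add: matrix_mul_assoc)
  also have "\<dots> = transpose (Y ** K) ** Y" using assms(8) by simp
  also have "\<dots> = transpose (K ** X ** K) ** transpose Y ** Y" using assms(1)
    by (simp add: matrix_transpose_mul matrix_mul_assoc)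
  also have "\<dots> = (transpose (X ** K) ** transpose (Y ** K)) ** Y"
    by (simp add: matrix_transpose_mul matrix_mul_assoc)
  also have "\<dots> = X ** K ** (Y ** K ** Y)" using assms(4,8) by (simp add: matrix_mul_assoc)
  also have "\<dots> = X ** K ** Y" using assms(6) by simp
  finally show ?thesis using 1 by simp
qed

lemma pinv_sym_exists:
  fixes K :: "real^'m^'m" assumes Ks: "transpose K = K"
  shows "\<exists>X. K**X**K = K \<and> X**K**X = X \<and> transpose (K**X) = K**X \<and> transpose (X**K) = X**K \<and> transpose X = X"
proof -
  define S where "S = range ((*v) K)"
  have "subspace S" unfolding S_def
    by (rule linear_subspace_image) auto
  then obtain Bs where Bs: "Bs \<subseteq> S" "pairwise orthogonal Bs" "\<And>x. x \<in> Bs \<Longrightarrow> norm x = 1"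
     "independent Bs" "span Bs = S"
    by (rule orthonormal_basis_subspace) blast
  have fin: "finite Bs" using Bs(4) independent_imp_finite by blast
  define Pm :: "real^'m^'m" where "Pm = (\<chi> i j. \<Sum>b\<in>Bs. b$i * b$j)"
  have Pm_mv: "Pm *v v = (\<Sum>b\<in>Bs. (v \<bullet> b) *\<^sub>R b)" for v
    unfolding Pm_def
    apply (simp add: vec_eq_iff matrix_vector_mult_def inner_vec_def sum_distrib_left sum_distrib_right sum_component)
    apply (subst sum.swap) apply (simp add: mult_ac)
    done
  have Pm_in: "Pm *v v \<in> S" for v
    unfolding Pm_mv Bs(5)[symmetric] by (simp add: span_sum span_mul span_base span_scale)
  have Pm_fix: "v \<in> S \<Longrightarrow> Pm *v v = v" for v
    unfolding Pm_mv using orthonormal_basis_expand[OF Bs(2) Bs(3) _ fin] Bs(5) by auto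
  have Pms: "transpose Pm = Pm" unfolding Pm_def by (simp add: transpose_def vec_eq_iff mult.commute)
  have PK: "Pm ** K = K"
    by (simp add: matrix_eq matrix_vector_mul_assoc[symmetric] Pm_fix S_def)
  have KP: "K ** Pm = K"
    by (metis PK Ks Pms matrix_transpose_mul)
  have PP: "Pm ** Pm = Pm"
    by (simp add: matrix_eq matrix_vector_mul_assoc[symmetric] Pm_fix Pm_in)
  define F where "F = K + mat 1 - Pm"
  have FP: "F ** Pm = K" unfolding F_def by (simp add: mm_sub_r mm_add_r KP PP)
  have PF: "Pm ** F = K" unfolding F_def by (simp add: mm_sub_l matrix_add_ldistrib PK PP)
  have Fs: "transpose F = F" unfolding F_def by (simp add: transpose_sub transpose_add Ks Pms)
  have ker: "v = 0" if "F *v v = 0" for v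
  proof -
    have "K *v v = 0" using that by (metis PF matrix_vector_mul_assoc matrix_vector_mult_0_right)
    hence "Pm *v v = v" using that unfolding F_def
      by (simp add: matrix_vector_mult_diff_rdistrib matrix_vector_mult_add_rdistrib)
    hence "v \<in> S" using Pm_in by metis
    then obtain w where w: "v = K *v w" unfolding S_def by auto
    have "v \<bullet> v = w \<bullet> (K *v v)" using w inner_mv_sym[OF Ks] by (metis inner_commute)
    thus ?thesis using \<open>K *v v = 0\<close> by simp
  qed
  obtain G where GF: "G ** F = mat 1" using ker matrix_left_invertible_ker by blast
  hence FG: "F ** G = mat 1" using matrix_left_right_inverse by blast
  have PG: "Pm ** G = G ** Pm"
  proof -
    have "Pm ** G = (G ** F) ** Pm ** G" using GF by simp
    also have "\<dots> = G ** K ** G" by (metis FP matrix_mul_assoc)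
    also have "\<dots> = (G ** Pm) ** (F ** G)" by (metis PF matrix_mul_assoc)
    also have "\<dots> = G ** Pm" using FG by simp
    finally show ?thesis .
  qed
  have Gs: "transpose G = G"
  proof -
    have "transpose G ** F = mat 1" using FG Fs by (metis matrix_transpose_mul transpose_mat)
    have "transpose G = transpose G ** (F ** G)" using FG by simp
    also have "\<dots> = (transpose G ** F) ** G" by (simp add: matrix_mul_assoc)
    finally show ?thesis using \<open>transpose G ** F = mat 1\<close> by simp
  qed
  define X where "X = G ** Pm"
  have KX: "K ** X = Pm" unfolding X_def
    by (metis PF FG matrix_mul_assoc matrix_mul_lid PP)
  have XK: "X ** K = Pm" unfolding X_def
    by (metis FP GF matrix_mul_assoc matrix_mul_lid PK)
  have Xs: "transpose X = X" unfolding X_def by (simp add: matrix_transpose_mul Pms Gs PG)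
  show ?thesis
    apply (rule exI[of _ X])
    using KX XK Xs Pms PK PP unfolding X_def by (simp add: matrix_mul_assoc[symmetric]) (metis PG PP matrix_mul_assoc)
qed

lemma pinv_sym:
  fixes K :: "real^'m^'m" assumes Ks: "transpose K = K"
  shows "K ** pinv K ** K = K \<and> pinv K ** K ** pinv K = pinv K \<and> transpose (pinv K) = pinv K"
proof -
  obtain X where X: "K**X**K = K" "X**K**X = X" "transpose (K**X) = K**X" "transpose (X**K) = X**K" "transpose X = X"
    using pinv_sym_exists[OF Ks] by blast
  have "pinv K = X" unfolding pinv_def
    apply (rule the_equality) using X apply blast
    using pinv_unique X by blast
  thus ?thesis using X by simp
qed

lemma sum_delta_mult: fixes f :: "'a::finite \<Rightarrow> real" shows "(\<Sum>j\<in>UNIV. f j * (if j = l then 1 else 0)) = (f l :: real)"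
proof -
  have "(\<lambda>j. f j * (if j=l then 1 else 0)) = (\<lambda>j. if j = l then f j else 0)" by auto
  show ?thesis unfolding \<open>(\<lambda>j. f j * (if j=l then 1 else 0)) = (\<lambda>j. if j = l then f j else 0)\<close> by simp
qed



lemma mat_entry: "(M::real^'n^'m) $ i $ j = axis i 1 \<bullet> (M *v axis j 1)"
  by (simp add: matrix_vector_mult_def inner_vec_def axis_def if_distrib if_distribR cong: if_cong)

lemma loewner_iff: "loewner_le P Q \<longleftrightarrow> (\<forall>v. v \<bullet> (P *v v) \<le> v \<bullet> (Q *v v))"
  by (simp add: loewner_le_def matrix_vector_mult_diff_rdistrib inner_diff_right)

lemma topk_sum:
  fixes r :: "'n::finite \<Rightarrow> real" and idx :: "'k::finite \<Rightarrow> 'n"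
  assumes inj: "inj idx" and top: "\<And>i j. i \<in> range idx \<Longrightarrow> j \<notin> range idx \<Longrightarrow> r j \<le> r i"
  shows "(\<Sum>j\<in>-range idx. r j) \<le> (1 - real CARD('k) / real CARD('n)) * (\<Sum>j\<in>UNIV. r j)"
proof -
  let ?S = "range idx"
  have cS: "card ?S = CARD('k)" using card_image[OF inj] by simp
  have cC: "card (-?S) = CARD('n) - CARD('k)" using card_Diff_subset[of ?S UNIV] cS by (simp add: Compl_eq_Diff_UNIV)
  have kd: "CARD('k) \<le> CARD('n)" using cS card_mono[of UNIV ?S] by (metis finite subset_UNIV)
  define a where "a = (\<Sum>j\<in>?S. r j)"
  define b where "b = (\<Sum>j\<in>-?S. r j)"
  have tot: "(\<Sum>j\<in>UNIV. r j) = a + b" unfolding a_def b_def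
    using sum.subset_diff[of ?S UNIV r] by (simp add: Compl_eq_Diff_UNIV)
  have "(\<Sum>j\<in>-?S. \<Sum>i\<in>?S. r j) \<le> (\<Sum>j\<in>-?S. \<Sum>i\<in>?S. r i)"
    by (rule sum_mono, rule sum_mono) (use top in auto)
  hence "real CARD('k) * b \<le> real (CARD('n) - CARD('k)) * a"
    by (simp add: a_def b_def cS cC sum_distrib_left mult.commute)
  hence "real CARD('k) * b \<le> (real CARD('n) - real CARD('k)) * a" using kd by (simp add: of_nat_diff)
  hence "real CARD('n) * b \<le> (real CARD('n) - real CARD('k)) * (a + b)" by (simp add: algebra_simps)
  hence "b \<le> (real CARD('n) - real CARD('k)) * (a + b) / real CARD('n)"
    by (simp add: field_simps)
  thus ?thesis unfolding tot b_def[symmetric] by (simp add: field_simps)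
qed

lemma sr_main:
  fixes G A :: "real^'n^'n" and U :: "real^'k^'n"
  assumes Gs: "transpose G = G" and As: "transpose A = A" and AG: "loewner_le A G"
    and E: "is_Ek (G - A) U"
  shows "loewner_le A (sr_k G A U) \<and>
     trace (sr_k G A U - A) \<le> (1 - real CARD('k) / real CARD('n)) * trace (G - A)"
proof -
  define R where "R = G - A"
  have Rs: "transpose R = R" unfolding R_def by (simp add: transpose_sub Gs As)
  have Rpsd: "0 \<le> v \<bullet> (R *v v)" for v using AG unfolding loewner_le_def R_def by blast
  obtain idx :: "'k \<Rightarrow> 'n" where inj: "inj idx"
    and top: "\<And>i j. i \<in> range idx \<Longrightarrow> j \<notin> range idx \<Longrightarrow> R$j$j \<le> R$i$i"
    and Ud: "U = (\<chi> j l. if j = idx l then 1 else 0)"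
    using E unfolding is_Ek_def R_def by blast
  define K where "K = transpose U ** R ** U"
  have Ks: "transpose K = K" unfolding K_def by (simp add: matrix_transpose_mul Rs matrix_mul_assoc)
  define X where "X = pinv K"
  have X1: "K ** X ** K = K" and X2: "X ** K ** X = X" and Xs: "transpose X = X"
    using pinv_sym[OF Ks] unfolding X_def by auto
  define N where "N = R ** U ** X ** transpose U ** R"
  have sr: "sr_k G A U = G - N"
  proof (cases "G ** U = A ** U")
    case True
    hence "R ** U = 0" unfolding R_def by (simp add: mm_sub_r)
    thus ?thesis using True unfolding sr_k_def N_def by simp
  qed (simp add: sr_k_def N_def X_def K_def R_def)
  have Kq: "u \<bullet> (K *v u) = (U *v u) \<bullet> (R *v (U *v u))" for u
  proof -
    have "u \<bullet> (K *v u) = u \<bullet> (transpose U *v (R *v (U *v u)))"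
      unfolding K_def by (simp only: matrix_vector_mul_assoc matrix_mul_assoc)
    also have "\<dots> = (U *v u) \<bullet> (R *v (U *v u))"
      by (subst inner_mv_transpose) (simp only: transpose_transpose)
    finally show ?thesis .
  qed
  have Kpsd: "0 \<le> u \<bullet> (K *v u)" for u using Kq Rpsd by simp
  have Xq: "y \<bullet> (X *v y) = (X *v y) \<bullet> (K *v (X *v y))" for y
  proof -
    have "y \<bullet> (X *v y) = y \<bullet> (X *v (K *v (X *v y)))" using X2
      by (simp add: matrix_vector_mul_assoc matrix_mul_assoc)
    also have "\<dots> = (X *v y) \<bullet> (K *v (X *v y))" using inner_mv_sym[OF Xs] by simp
    finally show ?thesis .
  qed
  have Xpsd: "0 \<le> y \<bullet> (X *v y)" for y using Xq Kpsd by simp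
  have Nq: "v \<bullet> (N *v v) = (transpose U *v (R *v v)) \<bullet> (X *v (transpose U *v (R *v v)))" for v
  proof -
    have "v \<bullet> (N *v v) = v \<bullet> (R *v (U *v (X *v (transpose U *v (R *v v)))))"
      unfolding N_def by (simp only: matrix_vector_mul_assoc matrix_mul_assoc)
    also have "\<dots> = (R *v v) \<bullet> (U *v (X *v (transpose U *v (R *v v))))" using inner_mv_sym[OF Rs] by simp
    also have "\<dots> = (transpose U *v (R *v v)) \<bullet> (X *v (transpose U *v (R *v v)))"
      by (simp add: inner_mv_transpose)
    finally show ?thesis .
  qed
  have psd: "v \<bullet> (N *v v) \<le> v \<bullet> (R *v v)" for v
  proof -
    define y where "y = transpose U *v (R *v v)"
    define z where "z = X *v y"
    define w where "w = v - U *v z"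
    have e1: "v \<bullet> (R *v (U *v z)) = y \<bullet> z"
      unfolding y_def using inner_mv_sym[OF Rs] inner_mv_transpose by metis
    have e2: "(U *v z) \<bullet> (R *v (U *v z)) = y \<bullet> z"
    proof -
      have "(U *v z) \<bullet> (R *v (U *v z)) = z \<bullet> (K *v z)" using Kq by simp
      also have "\<dots> = y \<bullet> (X *v y)" unfolding z_def using Xq by simp
      finally show ?thesis unfolding z_def .
    qed
    have e3: "(U *v z) \<bullet> (R *v v) = y \<bullet> z" using e1 inner_mv_sym[OF Rs] by (metis inner_commute)
    have "w \<bullet> (R *v w) = v \<bullet> (R *v v) - y \<bullet> z"
      unfolding w_def using e1 e2 e3
      by (simp add: matrix_vector_mult_diff_distrib inner_diff_left inner_diff_right)
    moreover have "v \<bullet> (N *v v) = y \<bullet> z" unfolding Nq y_def z_def ..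
    ultimately show ?thesis using Rpsd[of w] by simp
  qed
  have part1: "loewner_le A (sr_k G A U)"
    unfolding loewner_iff sr
  proof
    fix v
    have "v \<bullet> ((G - N) *v v) = v \<bullet> (A *v v) + (v \<bullet> (R *v v) - v \<bullet> (N *v v))"
      unfolding R_def by (simp add: matrix_vector_mult_diff_rdistrib inner_diff_right)
    thus "v \<bullet> (A *v v) \<le> v \<bullet> ((G - N) *v v)" using psd[of v] by simp
  qed
  have Nd: "0 \<le> N$i$i" for i
    unfolding mat_entry Nq using Xpsd by simp
  have Ue: "U *v axis l 1 = axis (idx l) 1" for l
    unfolding Ud by (simp add: matrix_vector_mult_def axis_def vec_eq_iff sum_delta_mult)
  have NR: "N$i$i = R$i$i" if iS: "i \<in> range idx" for i
  proof -
    obtain l where il: "i = idx l" using iS by blast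
    have y: "transpose U *v (R *v axis i 1) = K *v axis l 1"
      unfolding K_def il Ue[symmetric] by (simp only: matrix_vector_mul_assoc matrix_mul_assoc)
    have "N$i$i = (K *v axis l 1) \<bullet> (X *v (K *v axis l 1))" unfolding mat_entry Nq y ..
    also have "\<dots> = axis l 1 \<bullet> (K *v (X *v (K *v axis l 1)))" using inner_mv_sym[OF Ks] by simp
    also have "\<dots> = axis l 1 \<bullet> (K *v axis l 1)" using X1 by (simp add: matrix_vector_mul_assoc matrix_mul_assoc)
    also have "\<dots> = R$i$i" unfolding Kq Ue il mat_entry[of R] ..
    finally show ?thesis .
  qed
  have "trace (sr_k G A U - A) = (\<Sum>i\<in>UNIV. R$i$i - N$i$i)"
    unfolding sr trace_def R_def by (simp add: algebra_simps)
  also have "\<dots> = (\<Sum>i\<in>-range idx. R$i$i - N$i$i) + (\<Sum>i\<in>range idx. R$i$i - N$i$i)"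
    using sum.subset_diff[of "range idx" UNIV "\<lambda>i. R$i$i - N$i$i"] by (simp add: Compl_eq_Diff_UNIV)
  also have "\<dots> = (\<Sum>i\<in>-range idx. R$i$i - N$i$i)" using NR by simp
  also have "\<dots> \<le> (\<Sum>i\<in>-range idx. R$i$i)" using Nd by (intro sum_mono) simp
  also have "\<dots> \<le> (1 - real CARD('k) / real CARD('n)) * (\<Sum>i\<in>UNIV. R$i$i)"
    by (rule topk_sum[OF inj]) (use top in blast)
  finally show ?thesis using part1 unfolding R_def trace_def by simp
qed



lemma mnorm_neg: "mnorm (x - y) A = mnorm (y - x) A"
proof -
  have "x - y = (-1::real) *\<^sub>R (y - x)" by simp
  thus ?thesis unfolding mnorm_def by (simp only: matrix_vector_mult_scaleR inner_scaleR_left inner_scaleR_right) simp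
qed

lemma trace_scaleR: "trace (c *\<^sub>R (B::real^'n^'n)) = c * trace B"
  by (simp add: trace_def sum_distrib_left)

lemma trace_quad: "trace (M::real^'n^'n) = (\<Sum>i\<in>UNIV. axis i 1 \<bullet> (M *v axis i 1))"
  unfolding trace_def using mat_entry by metis

lemma poly_ineq: fixes s :: real assumes s: "s > -1" shows "(1 + s / 2) ^ 4 * (1 - 2 * s) \<le> 1"
proof -
  define u where "u = s/2 + 1/2"
  have u: "u \<ge> 0" using s unfolding u_def by simp
  have "4 * u ^ 3 + 9 * u ^ 2 + 8 * u + 13 / 4 \<ge> 0" using u by (simp add: add_nonneg_nonneg)
  hence "(s / 2) ^ 2 * (4 * u ^ 3 + 9 * u ^ 2 + 8 * u + 13 / 4) \<ge> 0" by simp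
  moreover have "1 - (1 + s / 2) ^ 4 * (1 - 2 * s) = (s / 2) ^ 2 * (4 * u ^ 3 + 9 * u ^ 2 + 8 * u + 13 / 4)"
    unfolding u_def by (simp add: field_simps power2_eq_square power3_eq_cube power4_eq_xxxx)
  ultimately show ?thesis by linarith
qed

theorem mainTheorem3:
  fixes f :: "real^'n \<Rightarrow> real" and g :: "real^'n \<Rightarrow> real^'n"
    and H :: "real^'n \<Rightarrow> real^'n^'n"
    and \<mu> L M :: real and x xp :: "real^'n" and B :: "real^'n^'n" and U :: "real^'k^'n"
  assumes grad: "\<And>y. (f has_derivative (\<lambda>h. g y \<bullet> h)) (at y)"
    and hess: "\<And>y. (g has_derivative (\<lambda>h. H y *v h)) (at y)"
    and Hsym: "\<And>y. symmetric_mat (H y)"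
    and mu_pos: "0 < \<mu>"
    and lower: "\<And>y. loewner_le (\<mu> *\<^sub>R mat 1) (H y)"
    and upper: "\<And>y. loewner_le (H y) (L *\<^sub>R mat 1)"
    and ssc: "strongly_self_concordant M H"
    and kd: "CARD('k) < CARD('n)"
    and Bsym: "symmetric_mat B"
    and BH: "loewner_le (H x) B"
    and U: "is_Ek (((1 + M * mnorm (xp - x) (H x) / 2)\<^sup>2 *\<^sub>R B) - H xp) U"
  shows "loewner_le (H xp) (sr_k ((1 + M * mnorm (xp - x) (H x) / 2)\<^sup>2 *\<^sub>R B) (H xp) U)
    \<and> trace (sr_k ((1 + M * mnorm (xp - x) (H x) / 2)\<^sup>2 *\<^sub>R B) (H xp) U - H xp) / trace (H xp)
      \<le> (1 - real CARD('k) / real CARD('n)) * (1 + M * mnorm (xp - x) (H x) / 2) ^ 4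
         * (trace (B - H x) / trace (H x) + 2 * M * mnorm (xp - x) (H x))"
proof -
  define s where "s = M * mnorm (xp - x) (H x)"
  define c where "c = 1 + s / 2"
  define A where "A = H xp"
  define Hx where "Hx = H x"
  define G where "G = c\<^sup>2 *\<^sub>R B"
  have c2: "c\<^sup>2 = 1 + s + s\<^sup>2/4" unfolding c_def by (simp add: power2_eq_square algebra_simps)
  have Hpos: "\<mu> * (v \<bullet> v) \<le> v \<bullet> (H y *v v)" for v y
    using lower[of y] unfolding loewner_iff by (simp add: scaleR_matrix_vector_assoc[symmetric])
  have Hnn: "0 \<le> v \<bullet> (H y *v v)" for v y
    using Hpos[of v y] mu_pos by (meson order_trans inner_ge_zero mult_nonneg_nonneg less_imp_le)
  have s1: "v \<bullet> (Hx *v v) \<le> (1 + s) * (v \<bullet> (A *v v))" for v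
  proof -
    have "loewner_le (H x - H xp) ((M * mnorm (x - xp) (H x)) *\<^sub>R H xp)"
      using ssc unfolding strongly_self_concordant_def by blast
    hence "v \<bullet> ((H x - H xp) *v v) \<le> v \<bullet> ((s *\<^sub>R H xp) *v v)"
      unfolding loewner_iff s_def mnorm_neg by blast
    thus ?thesis unfolding Hx_def A_def
      by (simp add: matrix_vector_mult_diff_rdistrib scaleR_matrix_vector_assoc[symmetric] inner_diff_right algebra_simps)
  qed
  have s2: "v \<bullet> (A *v v) \<le> (1 + s) * (v \<bullet> (Hx *v v))" for v
  proof -
    have "loewner_le (H xp - H x) ((M * mnorm (xp - x) (H x)) *\<^sub>R H x)"
      using ssc unfolding strongly_self_concordant_def by blast
    hence "v \<bullet> ((H xp - H x) *v v) \<le> v \<bullet> ((s *\<^sub>R H x) *v v)"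
      unfolding loewner_iff s_def by blast
    thus ?thesis unfolding Hx_def A_def
      by (simp add: matrix_vector_mult_diff_rdistrib scaleR_matrix_vector_assoc[symmetric] inner_diff_right algebra_simps)
  qed
  have BHq: "v \<bullet> (Hx *v v) \<le> v \<bullet> (B *v v)" for v using BH unfolding loewner_iff Hx_def by blast
  have AG: "loewner_le A G" unfolding loewner_iff
  proof
    fix v
    have h0: "0 \<le> v \<bullet> (Hx *v v)" unfolding Hx_def by (rule Hnn)
    have "v \<bullet> (A *v v) \<le> (1 + s) * (v \<bullet> (Hx *v v))" by (rule s2)
    also have "\<dots> \<le> c\<^sup>2 * (v \<bullet> (Hx *v v))" using h0 unfolding c2
      by (intro mult_right_mono) auto
    also have "\<dots> \<le> c\<^sup>2 * (v \<bullet> (B *v v))" using BHq by (intro mult_left_mono) auto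
    also have "\<dots> = v \<bullet> (G *v v)" unfolding G_def by (simp add: scaleR_matrix_vector_assoc[symmetric])
    finally show "v \<bullet> (A *v v) \<le> v \<bullet> (G *v v)" .
  qed
  have Gs: "transpose G = G" using Bsym unfolding G_def symmetric_mat_def by (simp add: transpose_scalar)
  have As: "transpose A = A" using Hsym unfolding A_def symmetric_mat_def by simp
  have E: "is_Ek (G - A) U" using U unfolding G_def A_def c_def s_def .
  have main: "loewner_le A (sr_k G A U) \<and>
     trace (sr_k G A U - A) \<le> (1 - real CARD('k) / real CARD('n)) * trace (G - A)"
    by (rule sr_main[OF Gs As AG E])
  define T0 where "T0 = trace Hx"
  define TA where "TA = trace A"
  define TB where "TB = trace B"
  define q where "q = 1 - real CARD('k) / real CARD('n)"
  have trpos: "0 < trace (H y)" for y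
  proof -
    have "0 < (\<Sum>i\<in>(UNIV::'n set). \<mu>)" using mu_pos by (simp add: zero_less_card_finite)
    also have "\<dots> \<le> (\<Sum>i\<in>UNIV. axis i 1 \<bullet> (H y *v axis i 1))"
    proof (intro sum_mono)
      fix i :: 'n
      show "\<mu> \<le> axis i 1 \<bullet> (H y *v axis i 1)" using Hpos[of "axis i 1" y] by (simp add: inner_axis_axis)
    qed
    finally show ?thesis unfolding trace_quad .
  qed
  have T0p: "0 < T0" and TAp: "0 < TA" unfolding T0_def TA_def Hx_def A_def using trpos by auto
  have T0A: "T0 \<le> (1 + s) * TA" unfolding T0_def TA_def trace_quad sum_distrib_left
    by (intro sum_mono s1)
  have TB0: "T0 \<le> TB" unfolding T0_def TB_def trace_quad by (intro sum_mono BHq)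
  have sp: "0 < 1 + s"
  proof (rule ccontr)
    assume "\<not> 0 < 1 + s"
    hence "(1 + s) * TA \<le> 0" using TAp by (simp add: mult_nonpos_nonneg)
    thus False using T0A T0p by linarith
  qed
  have q: "0 \<le> q" unfolding q_def using kd by (simp add: field_simps)
  have trGA: "trace (G - A) = c\<^sup>2 * TB - TA" unfolding G_def TB_def TA_def by (simp add: trace_sub trace_scaleR)
  have trBH: "trace (B - Hx) = TB - T0" unfolding TB_def T0_def by (simp add: trace_sub)
  have key: "(c\<^sup>2 * TB - TA) / TA \<le> c^4 * ((TB - T0) / T0 + 2 * s)"
  proof -
    have TBp: "0 \<le> TB" using TB0 T0p by simp
    have "(c\<^sup>2 * TB - TA) / TA = c\<^sup>2 * TB * (1 / TA) - 1" using TAp by (simp add: field_simps)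
    also have "\<dots> \<le> c\<^sup>2 * TB * ((1 + s) / T0) - 1"
    proof -
      have "1 / TA \<le> (1 + s) / T0" using T0A T0p TAp by (simp add: field_simps)
      thus ?thesis using TBp by (intro diff_right_mono mult_left_mono) auto
    qed
    also have "\<dots> = (1 + s) * c\<^sup>2 * (TB / T0) - 1" by simp
    also have "\<dots> \<le> c\<^sup>2 * c\<^sup>2 * (TB / T0) - 1"
    proof -
      have "1 + s \<le> c\<^sup>2" unfolding c2 by simp
      moreover have "0 \<le> c\<^sup>2 * (TB / T0)" using TBp T0p by simp
      ultimately show ?thesis by (metis diff_right_mono mult.assoc mult_right_mono)
    qed
    also have "\<dots> \<le> c^4 * ((TB - T0) / T0 + 2 * s)"
    proof -
      have p: "c^4 * (1 - 2 * s) \<le> 1" using poly_ineq[of s] sp unfolding c_def by simp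
      have h: "(TB - T0) / T0 = TB / T0 - 1" using T0p by (simp add: field_simps)
      have e: "c ^ 4 * ((TB - T0) / T0 + 2 * s) = c ^ 4 * (TB / T0) - c ^ 4 * (1 - 2 * s)"
        unfolding h by (simp add: algebra_simps)
      have c4: "c\<^sup>2 * c\<^sup>2 = c ^ 4" by (simp add: power4_eq_xxxx power2_eq_square)
      show ?thesis unfolding e c4 using p by linarith
    qed
    finally show ?thesis .
  qed
  have "trace (sr_k G A U - A) / TA \<le> q * (c\<^sup>2 * TB - TA) / TA"
    using main TAp unfolding q_def trGA TA_def by (simp add: divide_right_mono)
  also have "\<dots> = q * ((c\<^sup>2 * TB - TA) / TA)" by simp
  also have "\<dots> \<le> q * (c^4 * ((TB - T0) / T0 + 2 * s))" using key q by (rule mult_left_mono)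
  finally have fin: "trace (sr_k G A U - A) / TA \<le> q * c^4 * ((TB - T0) / T0 + 2 * s)" by simp
  show ?thesis
    using main fin unfolding G_def A_def c_def s_def q_def TA_def TB_def T0_def Hx_def trBH[unfolded Hx_def, symmetric]
    by (simp add: mult.assoc trace_sub)
qed

end
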